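(* Let $\mathcal{A}=(a_i)_{i=1}^\infty$ be a weakly increasing sequence of positive integers, $r$ a positive integer and $k>2r$. Suppose that $\gcd A=1$ for all $(k-2r)$-multisubsets $A$ of $\{a_1,\ldots,a_k\}$. Then the sequence $(p_\mathcal{A}(n,k))_{n\ge0}$ is asymptotically $r$-log-concave.
   Context: The restricted partition function $p_\mathcal{A}(n,k)$ is defined by $\sum_{n\ge0}p_\mathcal{A}(n,k)x^n=\prod_{i=1}^k(1-x^{a_i})^{-1}$ (partitions of $n$ with parts in the multiset $\{a_1,\ldots,a_k\}$, equal values with different indices counting as distinct colors). A $j$-multisubset of $\{a_1,\ldots,a_k\}$ is a sub-multiset obtained by choosing $j$ of the $k$ indices. For a real sequence $\omega=(w_i)_{i\ge0}$ define $\widehat{\mathcal L}\omega=(w_{i+1}^2-w_iw_{i+2})_{i\ge0}$ and $\widehat{\mathcal L}^j\omega=\widehat{\mathcal L}(\widehat{\mathcal L}^{j-1}\omega)$. The sequence $\omega$ is asymptotically $r$-log-concave if there is $N$ such that $(\widehat{\mathcal L}^j\omega)_i>0$ for all $j\in\{1,\ldots,r\}$ and all $i\geq N$. *)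

theory Defs
  imports "HOL-Computational_Algebra.Formal_Power_Series"
begin

definition p_A :: "(nat \<Rightarrow> nat) \<Rightarrow> nat \<Rightarrow> nat \<Rightarrow> real" where
  "p_A a k n = fps_nth (\<Prod>i\<in>{1..k}. inverse (1 - fps_X ^ a i) :: real fps) n"

definition L_hat :: "(nat \<Rightarrow> real) \<Rightarrow> (nat \<Rightarrow> real)" where
  "L_hat w = (\<lambda>i. (w (i+1))^2 - w i * w (i+2))"

definition asymp_r_log_concave :: "nat \<Rightarrow> (nat \<Rightarrow> real) \<Rightarrow> bool" where
  "asymp_r_log_concave r w \<longleftrightarrow>
     (\<exists>N. \<forall>j\<in>{1..r}. \<forall>i\<ge>N. (L_hat ^^ j) w i > 0)"

end

theory Submission
  imports Defs "HOL-Computational_Algebra.Computational_Algebra" "HOL-Computational_Algebra.Field_as_Ring"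
    "HOL-Library.Landau_Symbols"
begin
definition dlt :: "real poly \<Rightarrow> real poly" where "dlt p = p \<circ>\<^sub>p [:1,1:] - p"

lemma dlt_add: "dlt (p + q) = dlt p + dlt q"
  by (simp add: dlt_def pcompose_add)

lemma dlt_const: "degree p = 0 \<Longrightarrow> dlt p = 0"
  by (auto simp: dlt_def elim!: degree_eq_zeroE)

lemma pcompose_xpow: "([:0,1:] ^ D) \<circ>\<^sub>p q = q ^ D"
  by (induction D) (auto simp: pcompose_mult pcompose_pCons pcompose_1)

lemma dlt_monom: "dlt (smult c ([:0,1:] ^ D)) = smult c ([:1,1:]^D - [:0,1:]^D)"
  by (simp add: dlt_def pcompose_smult pcompose_xpow smult_diff_right)

lemma coeff_xpow: "coeff ([:0,1:] ^ D :: real poly) j = (if j = D then 1 else 0)"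
  proof -
  have "[:0,1:]^D = (monom 1 D :: real poly)" by (simp add: monom_altdef)
  then show ?thesis by (simp add: coeff_monom)
qed

lemma coeff_dlt_monom:
  "coeff (dlt (smult c ([:0,1:] ^ D))) j = (if j \<le> D then c * (of_nat (D choose j) - (if j = D then 1 else 0)) else 0)"
  by (auto simp: dlt_monom coeff_xpow coeff_linear_poly_power coeff_eq_0 degree_linear_power)

lemma dlt_main:
  "1 \<le> D \<Longrightarrow> degree p \<le> D \<Longrightarrow> (\<forall>j\<ge>D. coeff (dlt p) j = 0) \<and> coeff (dlt p) (D - 1) = of_nat D * coeff p D"
proof (induction D arbitrary: p rule: less_induct)
  case (less D)
  define c where "c = coeff p D"
  define R where "R = p - smult c ([:0,1:] ^ D)"
  have pR: "p = smult c ([:0,1:] ^ D) + R" by (simp add: R_def)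
  have cR: "coeff R j = 0" if "j \<ge> D" for j
    using less.prems that by (auto simp: R_def c_def coeff_xpow coeff_eq_0)
  have degR: "degree R \<le> D - 1"
    by (rule degree_le) (use cR in auto)
  have R0: "coeff (dlt R) j = 0" if "j \<ge> D - 1" for j
  proof (cases "D = 1")
    case True
    then have "degree R = 0" using degR by simp
    then show ?thesis by (simp add: dlt_const)
  next
    case False
    then have "1 \<le> D - 1" "D - 1 < D" using less.prems by auto
    from less.IH[OF this(2) this(1) degR] that show ?thesis by auto
  qed
  have mon: "coeff (dlt (smult c ([:0,1:] ^ D))) j = 0" if "j \<ge> D" for j
    using that by (auto simp: coeff_dlt_monom)
  have mon2: "coeff (dlt (smult c ([:0,1:] ^ D))) (D - 1) = of_nat D * c"
  proof -
    have "D choose (D - 1) = D" using less.prems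
      by (metis binomial_symmetric choose_one diff_diff_cancel diff_le_self)
    then show ?thesis using less.prems by (auto simp: coeff_dlt_monom)
  qed
  have dp: "coeff (dlt p) j = coeff (dlt (smult c ([:0,1:] ^ D))) j + coeff (dlt R) j" for j
    by (subst pR) (simp only: dlt_add coeff_add)
  show ?case
  proof
    show "\<forall>j\<ge>D. coeff (dlt p) j = 0" using dp mon R0 by simp
    show "coeff (dlt p) (D - 1) = of_nat D * coeff p D"
      using dp[of "D - 1"] mon2 R0[of "D - 1"] by (simp add: c_def)
  qed
qed

lemma dlt_degree:
  assumes "degree p \<ge> 1"
  shows "degree (dlt p) = degree p - 1" "lead_coeff (dlt p) = of_nat (degree p) * lead_coeff p"
proof -
  from dlt_main[OF assms order.refl]
  have A: "\<forall>j\<ge>degree p. coeff (dlt p) j = 0" and B: "coeff (dlt p) (degree p - 1) = of_nat (degree p) * lead_coeff p" by auto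
  have "degree (dlt p) \<le> degree p - 1"
    by (rule degree_le) (use A assms in auto)
  moreover have "coeff (dlt p) (degree p - 1) \<noteq> 0"
    using B assms by (auto simp: leading_coeff_neq_0)
  ultimately show "degree (dlt p) = degree p - 1"
    using le_degree le_antisym by blast
  then show "lead_coeff (dlt p) = of_nat (degree p) * lead_coeff p" using B by simp
qed

definition LP :: "real poly \<Rightarrow> real poly" where
  "LP q = (q \<circ>\<^sub>p [:1,1:])^2 - q * (q \<circ>\<^sub>p [:2,1:])"

lemma poly_LP: "poly (LP q) x = (poly q (x+1))^2 - poly q x * poly q (x+2)"
  by (simp add: LP_def poly_pcompose algebra_simps)

lemma LP_alt: "LP q = dlt q * (dlt q \<circ>\<^sub>p [:1,1:]) - (q \<circ>\<^sub>p [:1,1:]) * dlt (dlt q)"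
proof -
  have ss: "[:1,1:] \<circ>\<^sub>p [:1,1:] = ([:2,1:] :: real poly)"
    by (simp add: pcompose_pCons)
  have q2: "q \<circ>\<^sub>p [:2,1:] = (q \<circ>\<^sub>p [:1,1:]) \<circ>\<^sub>p [:1,1:]"
    by (simp add: pcompose_assoc[symmetric] ss)
  show ?thesis
    unfolding LP_def dlt_def q2 pcompose_diff
    by (simp add: algebra_simps power2_eq_square)
qed

lemma LP_degree:
  assumes D: "degree q \<ge> 2"
  shows "degree (LP q) = 2 * degree q - 2" "lead_coeff (LP q) = of_nat (degree q) * (lead_coeff q)^2"
proof -
  define D where "D = degree q"
  define c where "c = lead_coeff q"
  have c0: "c \<noteq> 0" using D by (auto simp: c_def)
  have d1: "degree (dlt q) = D - 1" "lead_coeff (dlt q) = of_nat D * c"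
    using dlt_degree[of q] D by (auto simp: D_def c_def)
  have d2: "degree (dlt (dlt q)) = D - 2" "lead_coeff (dlt (dlt q)) = of_nat (D - 1) * (of_nat D * c)"
    using dlt_degree[of "dlt q"] d1 D by (auto simp: D_def)
  have d3: "degree (dlt q \<circ>\<^sub>p [:1,1:]) = D - 1" "lead_coeff (dlt q \<circ>\<^sub>p [:1,1:]) = of_nat D * c"
    using d1 lead_coeff_comp[of "[:1,1:]" "dlt q"] by (auto simp: degree_pcompose)
  have d4: "degree (q \<circ>\<^sub>p [:1,1:]) = D" "lead_coeff (q \<circ>\<^sub>p [:1,1:]) = c"
    using lead_coeff_comp[of "[:1,1:]" q] by (auto simp: degree_pcompose D_def c_def)
  define A where "A = dlt q * (dlt q \<circ>\<^sub>p [:1,1:])"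
  define B where "B = (q \<circ>\<^sub>p [:1,1:]) * dlt (dlt q)"
  have dA: "degree A \<le> 2 * D - 2" "coeff A (2 * D - 2) = (of_nat D * c)^2"
    using coeff_mult_degree_sum[of "dlt q" "dlt q \<circ>\<^sub>p [:1,1:]"] degree_mult_le[of "dlt q" "dlt q \<circ>\<^sub>p [:1,1:]"] d1 d3 D
    by (auto simp: A_def D_def power2_eq_square mult_2 numeral_2_eq_2)
  have dB: "degree B \<le> 2 * D - 2" "coeff B (2 * D - 2) = c * (of_nat (D - 1) * (of_nat D * c))"
    using coeff_mult_degree_sum[of "q \<circ>\<^sub>p [:1,1:]" "dlt (dlt q)"] degree_mult_le[of "q \<circ>\<^sub>p [:1,1:]" "dlt (dlt q)"] d2 d4 D
    by (auto simp: B_def D_def mult_2 numeral_2_eq_2)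
  have LPAB: "LP q = A - B" by (simp add: LP_alt A_def B_def)
  have cf: "coeff (LP q) (2 * D - 2) = of_nat D * c^2"
    using D unfolding LPAB coeff_diff dA dB by (simp add: of_nat_diff D_def power2_eq_square algebra_simps)
  have le: "degree (LP q) \<le> 2 * D - 2" unfolding LPAB
    using degree_diff_le dA(1) dB(1) by blast
  have "coeff (LP q) (2 * D - 2) \<noteq> 0" using cf c0 D by (simp add: D_def)
  then have "degree (LP q) = 2 * D - 2" using le le_degree le_antisym by blast
  then show "degree (LP q) = 2 * degree q - 2" "lead_coeff (LP q) = of_nat (degree q) * (lead_coeff q)^2"
    using cf by (auto simp: D_def c_def)
qed

definition approx :: "(nat \<Rightarrow> real) \<Rightarrow> real poly \<Rightarrow> real \<Rightarrow> bool" where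
  "approx w q e \<longleftrightarrow> (\<lambda>n. w n - poly q (real n)) \<in> O(\<lambda>n. real n powr e)"

lemma powr_bigo_mono: "e1 \<le> e2 \<Longrightarrow> (\<lambda>n. real n powr e1) \<in> O(\<lambda>n. real n powr e2)"
  using powr_bigo_iff[OF filterlim_real_sequentially, of e1 e2] by simp

lemma powr_smallo_mono: "e1 < e2 \<Longrightarrow> (\<lambda>n. real n powr e1) \<in> o(\<lambda>n. real n powr e2)"
  using powr_smallo_iff[OF filterlim_real_sequentially, of e1 e2] by simp

lemma poly_bigo:
  assumes "degree q \<le> m"
  shows "(\<lambda>n. poly q (real n)) \<in> O(\<lambda>n. real n powr real m)"
proof (rule bigoI[where c = "\<Sum>i\<le>degree q. \<bar>coeff q i\<bar>"])
  show "\<forall>\<^sub>F n in sequentially. norm (poly q (real n)) \<le> (\<Sum>i\<le>degree q. \<bar>coeff q i\<bar>) * norm (real n powr real m)"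
    using eventually_ge_at_top[of "1::nat"]
  proof eventually_elim
    case (elim n)
    have x1: "real n \<ge> 1" using elim by simp
    have "norm (poly q (real n)) = \<bar>\<Sum>i\<le>degree q. coeff q i * real n ^ i\<bar>"
      by (simp add: poly_altdef)
    also have "\<dots> \<le> (\<Sum>i\<le>degree q. \<bar>coeff q i * real n ^ i\<bar>)" by (rule sum_abs)
    also have "\<dots> \<le> (\<Sum>i\<le>degree q. \<bar>coeff q i\<bar> * real n ^ m)"
    proof (rule sum_mono)
      fix i assume "i \<in> {..degree q}"
      then have "i \<le> m" using assms by simp
      then have "real n ^ i \<le> real n ^ m" using x1 by (simp add: power_increasing)
      then show "\<bar>coeff q i * real n ^ i\<bar> \<le> \<bar>coeff q i\<bar> * real n ^ m"
        by (simp add: abs_mult mult_left_mono)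
    qed
    also have "\<dots> = (\<Sum>i\<le>degree q. \<bar>coeff q i\<bar>) * norm (real n powr real m)"
      using x1 by (simp add: sum_distrib_right powr_realpow)
    finally show ?case .
  qed
qed

lemma shift_powr_bigo: "(\<lambda>n. real (n + j) powr e) \<in> O(\<lambda>n. real n powr e)"
proof (rule bigoI[where c = "2 powr \<bar>e\<bar>"])
  show "\<forall>\<^sub>F n in sequentially. norm (real (n + j) powr e) \<le> 2 powr \<bar>e\<bar> * norm (real n powr e)"
    using eventually_ge_at_top[of "max 1 j"]
  proof eventually_elim
    case (elim n)
    then have n1: "real n \<ge> 1" "real j \<le> real n" by auto
    show ?case
    proof (cases "e \<ge> 0")
      case True
      have "real (n + j) powr e \<le> (2 * real n) powr e"
        using n1 True by (intro powr_mono2) auto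
      also have "\<dots> = 2 powr e * real n powr e" using n1 by (simp add: powr_mult)
      finally show ?thesis using True by simp
    next
      case False
      have "real (n + j) powr e \<le> real n powr e"
        using n1 False by (intro powr_mono2') auto
      also have "\<dots> \<le> 2 powr \<bar>e\<bar> * real n powr e"
      proof -
        have "1 \<le> (2::real) powr \<bar>e\<bar>" by (rule ge_one_powr_ge_zero) auto
        from mult_right_mono[OF this, of "real n powr e"] show ?thesis by simp
      qed
      finally show ?thesis by simp
    qed
  qed
qed

lemma shift_bigo:
  assumes "f \<in> O(\<lambda>n. real n powr e)"
  shows "(\<lambda>n. f (n + j)) \<in> O(\<lambda>n. real n powr e)"
proof -
  have "(\<lambda>n. f (n + j)) \<in> O(\<lambda>n. real (n + j) powr e)"
    using landau_o.big.compose[OF assms filterlim_add_const_nat_at_top] by simp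
  then show ?thesis using shift_powr_bigo landau_o.big_trans by blast
qed

lemma approx_step:
  assumes ap: "approx w q e" and D: "degree q \<ge> 2" and e: "e \<le> real (degree q) - 1"
  shows "approx (L_hat w) (LP q) (real (degree q) + e)"
proof -
  define D where "D = degree q"
  define E where "E = (\<lambda>n. w n - poly q (real n))"
  define Q where "Q = (\<lambda>j n. poly q (real (n + j)))"
  define Es where "Es = (\<lambda>j n. E (n + j))"
  have E: "E \<in> O(\<lambda>n. real n powr e)" using ap by (simp add: approx_def E_def)
  have Es: "Es j \<in> O(\<lambda>n. real n powr e)" for j
    unfolding Es_def by (rule shift_bigo[OF E])
  have Q: "Q j \<in> O(\<lambda>n. real n powr real D)" for j
    unfolding Q_def by (rule shift_bigo[OF poly_bigo]) (simp add: D_def)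
  have QE: "(\<lambda>n. Q i n * Es j n) \<in> O(\<lambda>n. real n powr (real D + e))" for i j
    using landau_o.big.mult[OF Q[of i] Es[of j]] by (simp add: powr_add)
  have EE: "(\<lambda>n. Es i n * Es j n) \<in> O(\<lambda>n. real n powr (real D + e))" for i j
  proof -
    have pe: "(\<lambda>n. real n powr e * real n powr e) = (\<lambda>n. real n powr (e + e))"
      by (simp only: powr_add)
    have "(\<lambda>n. Es i n * Es j n) \<in> O(\<lambda>n. real n powr (e + e))"
      using landau_o.big.mult[OF Es[of i] Es[of j]] unfolding pe .
    moreover have "(\<lambda>n. real n powr (e + e)) \<in> O(\<lambda>n. real n powr (real D + e))"
      by (rule powr_bigo_mono) (use e in \<open>simp add: D_def\<close>)
    ultimately show ?thesis using landau_o.big_trans by blast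
  qed
  have wq: "w (n + j) = Q j n + Es j n" for n j by (simp add: Q_def Es_def E_def)
  have eq: "(\<lambda>n. L_hat w n - poly (LP q) (real n)) =
     (\<lambda>n. 2 * (Q 1 n * Es 1 n) + Es 1 n * Es 1 n - Q 0 n * Es 2 n - Q 2 n * Es 0 n - Es 0 n * Es 2 n)"
  proof
    fix n
    have "L_hat w n = (w (n+1))^2 - w (n+0) * w (n+2)" by (simp add: L_hat_def)
    also have "poly (LP q) (real n) = (Q 1 n)^2 - Q 0 n * Q 2 n"
      by (simp add: poly_LP Q_def add.commute)
    ultimately show "L_hat w n - poly (LP q) (real n) = 2 * (Q 1 n * Es 1 n) + Es 1 n * Es 1 n - Q 0 n * Es 2 n - Q 2 n * Es 0 n - Es 0 n * Es 2 n"
      unfolding wq by (simp add: algebra_simps power2_eq_square)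
  qed
  show ?thesis unfolding approx_def eq D_def[symmetric]
    by (intro sum_in_bigo QE EE) (simp add: QE)
qed

lemma approx_pos:
  assumes ap: "approx w q e" and D: "degree q \<ge> 1" and e: "e < real (degree q)" and c: "lead_coeff q > 0"
  shows "eventually (\<lambda>n. w n > 0) sequentially"
proof -
  define D where "D = degree q"
  define c where "c = lead_coeff q"
  define R where "R = q - monom c D"
  have degR: "degree R \<le> D - 1"
  proof (rule degree_le, intro allI impI)
    fix i assume "D - 1 < i"
    then have "i \<ge> D" using D by (simp add: D_def)
    then show "coeff R i = 0"
      by (cases "i = D") (auto simp: R_def c_def D_def coeff_eq_0 coeff_monom)
  qed
  have g1: "(\<lambda>n. w n - poly q (real n)) \<in> o(\<lambda>n. real n powr real D)"
    using ap landau_o.big_small_trans[OF _ powr_smallo_mono[of e "real D"]] e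
    by (simp add: approx_def D_def)
  have g2: "(\<lambda>n. poly R (real n)) \<in> o(\<lambda>n. real n powr real D)"
    using poly_bigo[OF degR] landau_o.big_small_trans[OF _ powr_smallo_mono[of "real (D - 1)" "real D"]] D
    by (simp add: D_def)
  have g: "(\<lambda>n. w n - c * real n powr real D) \<in> o(\<lambda>n. real n powr real D)"
  proof -
    have "(\<lambda>n. (w n - poly q (real n)) + poly R (real n)) \<in> o(\<lambda>n. real n powr real D)"
      using sum_in_smallo(1)[OF g1 g2] .
    moreover have "(\<lambda>n. (w n - poly q (real n)) + poly R (real n)) = (\<lambda>n. w n - c * real n powr real D)"
    proof
      fix n
      show "(w n - poly q (real n)) + poly R (real n) = w n - c * real n powr real D"
        using D by (cases "n = 0") (auto simp: R_def poly_monom powr_realpow D_def)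
    qed
    ultimately show ?thesis by simp
  qed
  have c0: "c / 2 > 0" using c by (simp add: c_def)
  show ?thesis
    using landau_o.smallD[OF g c0] eventually_ge_at_top[of "1::nat"]
  proof eventually_elim
    case (elim n)
    have p: "real n powr real D > 0" using elim by simp
    have h: "\<bar>w n - c * real n powr real D\<bar> \<le> c / 2 * real n powr real D"
      using elim(1) p by simp
    then have "w n - c * real n powr real D \<ge> - (c / 2 * real n powr real D)"
      unfolding abs_le_iff by linarith
    then have "w n \<ge> c / 2 * real n powr real D" by simp
    moreover have "c / 2 * real n powr real D > 0" using p c0 by simp
    ultimately show ?case by linarith
  qed
qed

lemma approx_iterate:
  assumes ap: "approx w q (real (degree q) - real (2*r+1))" and D: "degree q \<ge> 2" and c: "lead_coeff q > 0"
  shows "j \<le> r \<Longrightarrow> \<exists>q'. approx ((L_hat^^j) w) q' (real (degree q') - (real (2*r+1) - 2 * real j))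
              \<and> degree q' \<ge> 2 \<and> lead_coeff q' > 0"
proof (induction j)
  case 0
  then show ?case using assms by auto
next
  case (Suc j)
  then obtain q' where q': "approx ((L_hat^^j) w) q' (real (degree q') - (real (2*r+1) - 2 * real j))"
    "degree q' \<ge> 2" "lead_coeff q' > 0" by auto
  have st: "approx (L_hat ((L_hat^^j) w)) (LP q') (real (degree q') + (real (degree q') - (real (2*r+1) - 2 * real j)))"
    by (rule approx_step[OF q'(1,2)]) (use Suc.prems in auto)
  have dg: "degree (LP q') = 2 * degree q' - 2" "lead_coeff (LP q') = of_nat (degree q') * (lead_coeff q')^2"
    using LP_degree[OF q'(2)] by auto
  have "real (degree (LP q')) = 2 * real (degree q') - 2" using dg(1) q'(2) by (simp add: of_nat_diff)
  then have ex: "real (degree q') + (real (degree q') - (real (2*r+1) - 2 * real j))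
       = real (degree (LP q')) - (real (2*r+1) - 2 * real (Suc j))" by simp
  show ?case
  proof (intro exI conjI)
    show "approx ((L_hat ^^ Suc j) w) (LP q') (real (degree (LP q')) - (real (2 * r + 1) - 2 * real (Suc j)))"
      using st unfolding ex by simp
    show "2 \<le> degree (LP q')" using dg(1) q'(2) by simp
    have "real (degree q') > 0" using q'(2) by simp
    then show "0 < lead_coeff (LP q')" unfolding dg(2) using q'(3) by (intro mult_pos_pos) auto
  qed
qed

lemma approx_final:
  assumes ap: "approx w q (real (degree q) - real (2*r+1))" and D: "degree q \<ge> 2" and c: "lead_coeff q > 0"
  shows "asymp_r_log_concave r w"
proof -
  have ev: "eventually (\<lambda>i. (L_hat ^^ j) w i > 0) sequentially" if j: "j \<in> {1..r}" for j
  proof -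
    obtain q' where q': "approx ((L_hat^^j) w) q' (real (degree q') - (real (2*r+1) - 2 * real j))"
      "degree q' \<ge> 2" "lead_coeff q' > 0" using approx_iterate[OF assms, of j] j by auto
    show ?thesis by (rule approx_pos[OF q'(1)]) (use q' j in auto)
  qed
  have "eventually (\<lambda>i. \<forall>j\<in>{1..r}. (L_hat ^^ j) w i > 0) sequentially"
    using ev by (subst eventually_ball_finite_distrib) auto
  then obtain N where "\<forall>i\<ge>N. \<forall>j\<in>{1..r}. (L_hat ^^ j) w i > 0"
    by (auto simp: eventually_sequentially)
  then show ?thesis unfolding asymp_r_log_concave_def by blast
qed

definition geo :: "nat \<Rightarrow> 'a::comm_ring_1 poly" where
  "geo m = (\<Sum>j<m. monom 1 j)"

lemma coeff_geo: "coeff (geo m) j = (if j < m then 1 else 0)"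
  by (simp add: geo_def coeff_sum coeff_monom)

lemma geo_mult: "[:1,-1:] * geo m = 1 - monom 1 m"
proof (induction m)
  case 0 then show ?case by (simp add: geo_def)
next
  case (Suc m)
  have "[:1,-1:] * monom 1 m = (monom 1 m - monom 1 (Suc m) :: 'a poly)"
    by (simp add: monom_Suc algebra_simps)
  moreover have "geo (Suc m) = geo m + (monom 1 m :: 'a poly)" by (simp add: geo_def)
  ultimately show ?case using Suc by (simp add: distrib_left)
qed

lemma poly_geo_1: "poly (geo m) 1 = of_nat m"
  by (simp add: geo_def poly_sum poly_monom)

lemma poly_geo_0: "m > 0 \<Longrightarrow> poly (geo m) 0 = 1"
  by (simp add: geo_def poly_sum poly_monom power_0_left sum.delta)

lemma map_geo: "map_poly complex_of_real (geo m) = geo m"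
  by (rule poly_eqI) (simp add: coeff_map_poly coeff_geo)

lemma fps_inverse_prod:
  "finite S \<Longrightarrow> (\<Prod>i\<in>S. inverse (f i)) = inverse (\<Prod>i\<in>S. f i :: real fps)"
  by (induction S rule: finite_induct) (auto simp: fps_inverse_mult)

lemma one_minus_X_pow: "(1 - fps_X ^ m :: real fps) = fps_of_poly ([:1,-1:] * geo m)"
  by (simp only: geo_mult) (simp add: fps_of_poly_diff fps_of_poly_monom')

definition UU :: "(nat \<Rightarrow> nat) \<Rightarrow> nat \<Rightarrow> real poly" where
  "UU a k = (\<Prod>i\<in>{1..k}. geo (a i))"

lemma fps_pA:
  "(\<Prod>i\<in>{1..k}. inverse (1 - fps_X ^ a i) :: real fps) = inverse (fps_of_poly ([:1,-1:]^k * UU a k))"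
proof -
  have "(\<Prod>i\<in>{1..k}. inverse (1 - fps_X ^ a i) :: real fps) = inverse (\<Prod>i\<in>{1..k}. (1 - fps_X ^ a i))"
    by (rule fps_inverse_prod) simp
  also have "(\<Prod>i\<in>{1..k}. (1 - fps_X ^ a i) :: real fps) = fps_of_poly (\<Prod>i\<in>{1..k}. [:1,-1:] * geo (a i))"
    by (simp add: one_minus_X_pow fps_of_poly_prod)
  also have "(\<Prod>i\<in>{1..k}. [:1,-1:] * geo (a i)) = [:1,-1:]^k * UU a k"
    by (simp only: prod.distrib UU_def prod_constant card_atLeastAtMost diff_Suc_1)
  finally show ?thesis .
qed

lemma fps_decomp:
  fixes A B U :: "real poly"
  assumes bez: "A * U + B * [:1,-1:]^k = 1" and U0: "poly U 0 \<noteq> 0"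
  shows "inverse (fps_of_poly ([:1,-1:]^k * U)) =
     fps_of_poly A * inverse ((1 - fps_X)^k) + fps_of_poly B * inverse (fps_of_poly U)"
proof -
  define L where "L = (1 - fps_X :: real fps)^k"
  define Uf where "Uf = fps_of_poly U"
  have L: "fps_of_poly ([:1,-1:]^k) = L"
    by (simp add: L_def fps_of_poly_power fps_of_poly_pCons fps_of_poly_diff)
  have L0: "L $ 0 \<noteq> 0" by (simp add: L_def)
  have U0': "Uf $ 0 \<noteq> 0" using U0 by (simp add: Uf_def poly_0_coeff_0)
  have one: "fps_of_poly A * Uf + fps_of_poly B * L = 1"
    using arg_cong[OF bez, of fps_of_poly] by (simp add: fps_of_poly_add fps_of_poly_mult L Uf_def)
  have "inverse (fps_of_poly ([:1,-1:]^k * U)) = inverse L * inverse Uf"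
    by (simp add: fps_of_poly_mult L Uf_def fps_inverse_mult)
  also have "\<dots> = (fps_of_poly A * Uf + fps_of_poly B * L) * (inverse L * inverse Uf)"
    by (simp add: one)
  also have "\<dots> = fps_of_poly A * inverse L * (Uf * inverse Uf) + fps_of_poly B * inverse Uf * (L * inverse L)"
    by (simp add: algebra_simps)
  also have "\<dots> = fps_of_poly A * inverse L + fps_of_poly B * inverse Uf"
    using L0 U0' by (simp add: inverse_mult_eq_1')
  finally show ?thesis by (simp add: L_def Uf_def)
qed

lemma binom_prod: "real ((m + j) choose j) = (\<Prod>l\<in>{1..j}. (real m + real l)) / fact j"
proof (induction j)
  case 0 then show ?case by simp
next
  case (Suc j)
  have "real (Suc (m + j) choose Suc j) * real (Suc j) = real (Suc (m + j)) * real ((m + j) choose j)"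
    using Suc_times_binomial_eq[of "m + j" j] by (simp only: of_nat_mult[symmetric])
  then have "real (Suc (m + j) choose Suc j) = real (Suc (m + j)) * real ((m + j) choose j) / real (Suc j)"
    by (simp add: field_simps)
  also have "\<dots> = (real m + real (Suc j)) * ((\<Prod>l\<in>{1..j}. (real m + real l)) / fact j) / real (Suc j)"
    by (simp only: Suc.IH) simp
  also have "\<dots> = (\<Prod>l\<in>{1..Suc j}. (real m + real l)) / fact (Suc j)"
    by (simp add: prod.cl_ivl_Suc fact_Suc field_simps)
  finally show ?case by simp
qed

definition Bi :: "nat \<Rightarrow> nat \<Rightarrow> real poly" where
  "Bi k i = smult (1 / fact (k - 1)) (\<Prod>l\<in>{1..k-1}. [:real l - real i, 1:])"

lemma poly_Bi: assumes "i \<le> n" shows "poly (Bi k i) (real n) = real ((n - i + (k - 1)) choose (k - 1))"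
proof -
  have "poly (Bi k i) (real n) = (\<Prod>l\<in>{1..k-1}. real (n - i) + real l) / fact (k - 1)"
    using assms by (simp add: Bi_def poly_prod of_nat_diff algebra_simps)
  also have "\<dots> = real ((n - i + (k - 1)) choose (k - 1))" by (rule binom_prod[symmetric])
  finally show ?thesis .
qed

lemma Bi_deg: "degree (Bi k i) \<le> k - 1" "coeff (Bi k i) (k - 1) = 1 / fact (k - 1)"
proof -
  have d: "degree (\<Prod>l\<in>{1..k-1}. [:real l - real i, 1:]) = k - 1"
    by (subst degree_prod_eq_sum_degree) auto
  have l: "lead_coeff (\<Prod>l\<in>{1..k-1}. [:real l - real i, 1:]) = 1"
    by (simp add: lead_coeff_prod)
  show "degree (Bi k i) \<le> k - 1" using d by (simp add: Bi_def)
  show "coeff (Bi k i) (k - 1) = 1 / fact (k - 1)" using d l by (simp add: Bi_def)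
qed

definition PP :: "real poly \<Rightarrow> nat \<Rightarrow> real poly" where
  "PP A k = (\<Sum>i\<le>degree A. smult (coeff A i) (Bi k i))"

lemma PP_deg: "degree (PP A k) \<le> k - 1" "coeff (PP A k) (k - 1) = poly A 1 / fact (k - 1)"
proof -
  show "degree (PP A k) \<le> k - 1" unfolding PP_def
  proof (intro degree_sum_le)
    fix i show "degree (smult (coeff A i) (Bi k i)) \<le> k - 1"
      using degree_smult_le Bi_deg(1) order.trans by blast
  qed simp
  show "coeff (PP A k) (k - 1) = poly A 1 / fact (k - 1)"
    unfolding PP_def coeff_sum coeff_smult Bi_deg(2) by (simp add: poly_altdef sum_divide_distrib)
qed

lemma coeff_PP:
  assumes k: "k \<ge> 1" and n: "n \<ge> degree A"
  shows "(fps_of_poly A * inverse ((1 - fps_X)^k)) $ n = poly (PP A k) (real n)"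
proof -
  have inv: "inverse ((1 - fps_X)^k :: real fps) = Abs_fps (\<lambda>m. of_nat ((k + m - 1) choose m))"
    using one_minus_const_fps_X_neg_power'[of k "1::real"] k by simp
  have "(fps_of_poly A * inverse ((1 - fps_X)^k)) $ n = (\<Sum>i=0..n. coeff A i * real ((k + (n - i) - 1) choose (n - i)))"
    by (simp add: fps_mult_nth inv)
  also have "\<dots> = (\<Sum>i\<le>degree A. coeff A i * real ((k + (n - i) - 1) choose (n - i)))"
  proof (rule sum.mono_neutral_right)
    show "{..degree A} \<subseteq> {0..n}" using n by auto
    show "\<forall>i\<in>{0..n} - {..degree A}. coeff A i * real ((k + (n - i) - 1) choose (n - i)) = 0"
      by (auto simp: coeff_eq_0)
  qed auto
  also have "\<dots> = (\<Sum>i\<le>degree A. coeff A i * poly (Bi k i) (real n))"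
  proof (rule sum.cong[OF refl])
    fix i assume "i \<in> {..degree A}"
    then have i: "i \<le> n" using n by auto
    have e: "k + (n - i) - 1 = n - i + (k - 1)" using k by simp
    have "(k + (n - i) - 1) choose (n - i) = (n - i + (k - 1)) choose (n - i)" by (simp only: e)
    also have "\<dots> = (n - i + (k - 1)) choose (k - 1)"
      using binomial_symmetric[of "n - i" "n - i + (k - 1)"] by simp
    finally have "(k + (n - i) - 1) choose (n - i) = (n - i + (k - 1)) choose (k - 1)" .
    then show "coeff A i * real ((k + (n - i) - 1) choose (n - i)) = coeff A i * poly (Bi k i) (real n)"
      using poly_Bi[OF i, of k] by simp
  qed
  also have "\<dots> = poly (PP A k) (real n)"
    by (simp add: PP_def poly_sum)
  finally show ?thesis .
qed

abbreviation cp :: "real poly \<Rightarrow> complex poly" where "cp \<equiv> map_poly complex_of_real"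

lemma cp_mult: "cp (p * q) = cp p * cp q"
  by (rule poly_eqI) (simp add: coeff_map_poly coeff_mult)

lemma cp_add: "cp (p + q) = cp p + cp q"
  by (rule poly_eqI) (simp add: coeff_map_poly)

lemma cp_prod: "cp (\<Prod>i\<in>S. f i) = (\<Prod>i\<in>S. cp (f i))"
  by (induction S rule: infinite_finite_induct) (auto simp: cp_mult)

lemma cp_power: "cp (p ^ n) = cp p ^ n"
  by (induction n) (auto simp: cp_mult)

lemma cp_eq_0: "cp p = 0 \<longleftrightarrow> p = 0"
  by (metis coeff_0 coeff_map_poly of_real_0 of_real_eq_0_iff poly_eqI)

lemma degree_cp: "degree (cp p) = degree p"
  by (rule degree_map_poly) simp

lemma cp_dvd:
  assumes "cp p dvd cp q" "p \<noteq> 0"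
  shows "p dvd q"
proof -
  have "cp q = cp p * cp (q div p) + cp (q mod p)"
    by (metis cp_mult cp_add div_mult_mod_eq mult.commute)
  then have "cp p dvd cp (q mod p)"
    by (metis assms(1) dvd_add_right_iff dvd_triv_left)
  moreover have "q mod p = 0 \<or> degree (q mod p) < degree p" using degree_mod_less[OF assms(2)] .
  ultimately show ?thesis
  proof (elim disjE)
    assume "cp p dvd cp (q mod p)" "degree (q mod p) < degree p"
    show ?thesis
    proof (rule ccontr)
      assume "\<not> p dvd q"
      then have "q mod p \<noteq> 0" using mod_0_imp_dvd by blast
      then have "degree (cp p) \<le> degree (cp (q mod p))"
        using dvd_imp_degree_le[OF \<open>cp p dvd cp (q mod p)\<close>] by (simp add: cp_eq_0)
      then show False using \<open>degree (q mod p) < degree p\<close> by (simp add: degree_cp)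
    qed
  qed (simp add: mod_0_imp_dvd)
qed


lemma order_dvd_complex:
  fixes p q :: "complex poly"
  assumes "p \<noteq> 0" "q \<noteq> 0" "\<And>z. order z p \<le> order z q"
  shows "p dvd q"
  using assms
proof (induction "degree p" arbitrary: p q rule: less_induct)
  case less
  show ?case
  proof (cases "degree p = 0")
    case True
    then have "is_unit p" using less.prems(1) by (simp add: is_unit_iff_degree)
    then show ?thesis by (rule unit_imp_dvd)
  next
    case False
    then have "\<not> constant (poly p)" by (simp add: constant_degree)
    then obtain z where z: "poly p z = 0" using fundamental_theorem_of_algebra by blast
    then obtain p' where p': "p = [:-z,1:] * p'" using poly_eq_0_iff_dvd by (metis dvdE)
    have "order z p \<noteq> 0" using z less.prems(1) order_root by blast
    then have "order z q \<noteq> 0" using less.prems(3)[of z] by simp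
    then have "poly q z = 0" using order_root by blast
    then obtain q' where q': "q = [:-z,1:] * q'" using poly_eq_0_iff_dvd by (metis dvdE)
    have p'0: "p' \<noteq> 0" and q'0: "q' \<noteq> 0" using less.prems p' q' by auto
    have "order w p' \<le> order w q'" for w
      using less.prems(3)[of w] less.prems(1,2) unfolding p' q' by (subst (asm) (1 2) order_mult) auto
    moreover have "degree p' < degree p" unfolding p' using p'0 by (subst degree_mult_eq) auto
    ultimately have "p' dvd q'" using less.hyps p'0 q'0 by blast
    then show ?thesis unfolding p' q' by (rule mult_dvd_mono[OF dvd_refl])
  qed
qed

lemma order_prod:
  fixes f :: "nat \<Rightarrow> complex poly"
  assumes "finite S" "\<And>i. i \<in> S \<Longrightarrow> f i \<noteq> 0"
  shows "order z (\<Prod>i\<in>S. f i) = (\<Sum>i\<in>S. order z (f i))"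
  using assms by (induction S rule: finite_induct) (auto simp: order_mult)

lemma order_power: "(p :: complex poly) \<noteq> 0 \<Longrightarrow> order z (p ^ n) = n * order z p"
  by (induction n) (auto simp: order_mult)

lemma geo_ne0: "m \<ge> 1 \<Longrightarrow> (geo m :: complex poly) \<noteq> 0"
  using poly_geo_1[of m, where 'a=complex] by auto

lemma geo_ne0_real: "m \<ge> 1 \<Longrightarrow> (geo m :: real poly) \<noteq> 0"
  using poly_geo_1[of m, where 'a=real] by auto

lemma poly_geo_mult: "(1 - z) * poly (geo m) z = 1 - z ^ m"
  using arg_cong[OF geo_mult[of m], of "\<lambda>p. poly p z"] by (simp add: poly_monom algebra_simps)

lemma order_geo_le1:
  assumes m: "m \<ge> 1" shows "order z (geo m :: complex poly) \<le> 1"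
proof -
  define p where "p = (1 - monom 1 m :: complex poly)"
  have p0: "p \<noteq> 0"
  proof
    assume "p = 0"
    then have "poly p 0 = 0" by simp
    then show False using m by (simp add: p_def poly_monom power_0_left)
  qed
  have "geo m dvd p" unfolding p_def geo_mult[symmetric] by (rule dvd_triv_right)
  then have "order z (geo m) \<le> order z p" using p0 dvd_imp_order_le by blast
  moreover have "rsquarefree p"
    unfolding rsquarefree_roots
  proof (intro allI notI)
    fix x assume h: "poly p x = 0 \<and> poly (pderiv p) x = 0"
    have "poly (pderiv p) x = - (of_nat m * x ^ (m - 1))"
      by (simp add: p_def pderiv_diff pderiv_monom poly_monom)
    then have "x ^ (m - 1) = 0" using h m by simp
    then have "x = 0" by simp
    then show False using h m by (simp add: p_def poly_monom power_0_left)
  qed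
  then have "order z p = 0 \<or> order z p = 1" unfolding rsquarefree_def by blast
  then have "order z p \<le> 1" by auto
  ultimately show ?thesis by simp
qed

lemma order_geo_0:
  assumes m: "m \<ge> 1" and z: "z = 1 \<or> z ^ m \<noteq> 1"
  shows "order z (geo m :: complex poly) = 0"
proof (rule order_0I)
  show "poly (geo m) z \<noteq> 0"
  proof (cases "z = 1")
    case True then show ?thesis using m by (simp add: poly_geo_1)
  next
    case False
    then have "z ^ m \<noteq> 1" using z by simp
    then show ?thesis using poly_geo_mult[of z m] by auto
  qed
qed

lemma order_geo_pos:
  assumes m: "m \<ge> 1" and z: "z \<noteq> 1" "z ^ m = 1"
  shows "order z (geo m :: complex poly) \<ge> 1"
proof -
  have "poly (geo m) z = 0" using poly_geo_mult[of z m] z by simp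
  then show ?thesis using order_root[of "geo m" z] geo_ne0[OF m] by simp
qed

lemma pow_gcd_eq_1:
  fixes z :: complex
  assumes "z ^ x = 1" "z ^ y = 1" shows "z ^ gcd x y = 1"
proof (cases "x = 0")
  case True then show ?thesis using assms by simp
next
  case False
  then obtain u v where uv: "x * u = y * v + gcd x y" using bezout_nat by blast
  have "1 = z ^ (x * u)" using assms by (simp add: power_mult)
  also have "\<dots> = z ^ (y * v) * z ^ gcd x y" by (simp add: uv power_add)
  also have "\<dots> = z ^ gcd x y" using assms by (simp add: power_mult)
  finally show ?thesis by simp
qed

lemma pow_Gcd_eq_1:
  fixes z :: complex
  assumes "finite S" "\<And>x. x \<in> S \<Longrightarrow> z ^ x = 1" shows "z ^ Gcd S = 1"
  using assms by (induction S rule: finite_induct) (auto intro: pow_gcd_eq_1)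

lemma card_roots:
  fixes z :: complex
  assumes gc: "\<forall>S. S \<subseteq> {1..k} \<and> card S = t \<longrightarrow> Gcd (a ` S) = 1" and z: "z \<noteq> 1"
  shows "card {i\<in>{1..k}. z ^ a i = 1} < t"
proof (rule ccontr)
  assume "\<not> ?thesis"
  then have "t \<le> card {i\<in>{1..k}. z ^ a i = 1}" by simp
  then obtain S where S: "S \<subseteq> {i\<in>{1..k}. z ^ a i = 1}" "card S = t" "finite S"
    by (rule obtain_subset_with_card_n)
  have "S \<subseteq> {1..k}" using S(1) by auto
  then have "Gcd (a ` S) = 1" using gc S(2) by blast
  moreover have "z ^ Gcd (a ` S) = 1" using S by (intro pow_Gcd_eq_1) auto
  ultimately show False using z by simp
qed

lemma UU_dvd:
  assumes pos: "\<forall>i\<ge>1. 0 < a i"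
    and gc: "\<forall>S. S \<subseteq> {1..k} \<and> card S = t \<longrightarrow> Gcd (a ` S) = 1"
  shows "UU a k dvd geo (\<Prod>i\<in>{1..k}. a i) ^ (t - 1)"
proof (rule cp_dvd)
  define M where "M = (\<Prod>i\<in>{1..k}. a i)"
  have M1: "M \<ge> 1" using pos by (simp add: M_def Suc_le_eq prod_pos)
  have ne: "geo (a i) \<noteq> (0 :: complex poly)" if "i \<in> {1..k}" for i
    using pos that by (intro geo_ne0) (auto simp: Suc_le_eq)
  have cU: "cp (UU a k) = (\<Prod>i\<in>{1..k}. geo (a i))"
    by (simp add: UU_def cp_prod map_geo)
  have cV: "cp (geo M ^ (t - 1)) = geo M ^ (t - 1)"
    by (simp add: cp_power map_geo)
  show "UU a k \<noteq> 0" unfolding UU_def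
    using pos by (subst prod_zero_iff) (auto intro!: geo_ne0_real simp: Suc_le_eq)
  show "cp (UU a k) dvd cp (geo (\<Prod>i\<in>{1..k}. a i) ^ (t - 1))"
    unfolding M_def[symmetric] cU cV
  proof (rule order_dvd_complex)
    show "(\<Prod>i\<in>{1..k}. geo (a i)) \<noteq> (0 :: complex poly)" using ne by simp
    show "geo M ^ (t - 1) \<noteq> (0 :: complex poly)" using geo_ne0[OF M1] by simp
    fix z :: complex
    have oU: "order z (\<Prod>i\<in>{1..k}. geo (a i)) = (\<Sum>i\<in>{1..k}. order z (geo (a i)))"
      using ne by (intro order_prod) auto
    show "order z (\<Prod>i\<in>{1..k}. geo (a i)) \<le> order z (geo M ^ (t - 1))"
    proof (cases "z = 1")
      case True
      then have "order z (geo (a i)) = 0" if "i \<in> {1..k}" for i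
        using pos that by (intro order_geo_0) (auto simp: Suc_le_eq)
      then show ?thesis unfolding oU by simp
    next
      case False
      have le: "order z (geo (a i)) \<le> (if z ^ a i = 1 then 1 else 0)" if "i \<in> {1..k}" for i
        using pos that order_geo_le1[of "a i" z] order_geo_0[of "a i" z] by (auto simp: Suc_le_eq)
      have "(\<Sum>i\<in>{1..k}. order z (geo (a i))) \<le> (\<Sum>i\<in>{1..k}. (if z ^ a i = 1 then 1 else 0))"
        by (rule sum_mono) (rule le)
      also have "\<dots> = card {i\<in>{1..k}. z ^ a i = 1}"
        using sum.inter_filter[of "{1..k}" "\<lambda>_. 1::nat" "\<lambda>i. z ^ a i = 1"] by simp
      finally have sU: "order z (\<Prod>i\<in>{1..k}. geo (a i)) \<le> card {i\<in>{1..k}. z ^ a i = 1}"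
        unfolding oU .
      show ?thesis
      proof (cases "{i\<in>{1..k}. z ^ a i = 1} = {}")
        case True
        then have "card {i\<in>{1..k}. z ^ a i = 1} = 0" by (simp only: card.empty)
        then show ?thesis using sU by linarith
      next
        case nonempty: False
        then obtain i where i: "i \<in> {1..k}" "z ^ a i = 1" by blast
        have "a i dvd M" unfolding M_def using i(1) by (intro dvd_prodI) auto
        then obtain c where "M = a i * c" by (auto elim: dvdE)
        then have "z ^ M = (z ^ a i) ^ c" by (simp only: power_mult)
        then have "z ^ M = 1" using i(2) by simp
        then have "order z (geo M) \<ge> 1" using order_geo_pos[OF M1 False] by blast
        then have "(t - 1) * 1 \<le> (t - 1) * order z (geo M)" by (rule mult_le_mono2)
        then have "order z (geo M ^ (t - 1)) \<ge> t - 1"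
          using order_power[OF geo_ne0[OF M1], of z "t - 1"] by simp
        moreover have "card {i\<in>{1..k}. z ^ a i = 1} \<le> t - 1"
          using card_roots[OF gc False] by simp
        ultimately show ?thesis using sU by linarith
      qed
    qed
  qed
qed

lemma inv_one_minus_XM:
  assumes M: "M \<ge> 1"
  shows "inverse (1 - fps_X ^ M :: real fps) = Abs_fps (\<lambda>n. if M dvd n then 1 else 0)"
proof (rule fps_inverse_unique, rule fps_ext)
  fix n
  show "((1 - fps_X ^ M) * Abs_fps (\<lambda>n. if M dvd n then 1 else 0 :: real)) $ n = (1 :: real fps) $ n"
  proof (cases "n < M")
    case True
    then have "M dvd n \<longleftrightarrow> n = 0" using M by (auto dest: dvd_imp_le)
    then show ?thesis using True by (simp add: algebra_simps fps_X_power_mult_nth)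
  next
    case False
    then have "M dvd n \<longleftrightarrow> M dvd (n - M)" using M by (simp add: dvd_minus_self)
    then show ?thesis using False M by (simp add: algebra_simps fps_X_power_mult_nth)
  qed
qed

lemma conv_bound:
  fixes f g :: "real fps"
  assumes f: "\<And>n. \<bar>f $ n\<bar> \<le> 1" and g: "\<And>n. \<bar>g $ n\<bar> \<le> (real n + 1) ^ m"
  shows "\<bar>(f * g) $ n\<bar> \<le> (real n + 1) ^ Suc m"
proof -
  have "\<bar>(f * g) $ n\<bar> \<le> (\<Sum>i=0..n. \<bar>f $ i * g $ (n - i)\<bar>)"
    unfolding fps_mult_nth by (rule sum_abs)
  also have "\<dots> \<le> (\<Sum>i=0..n. (real n + 1) ^ m)"
  proof (rule sum_mono)
    fix i assume "i \<in> {0..n}"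
    have "\<bar>g $ (n - i)\<bar> \<le> (real (n - i) + 1) ^ m" by (rule g)
    also have "\<dots> \<le> (real n + 1) ^ m" by (rule power_mono) auto
    finally show "\<bar>f $ i * g $ (n - i)\<bar> \<le> (real n + 1) ^ m"
      using f[of i] by (simp add: abs_mult) (metis abs_ge_zero mult_le_one mult_mono' order_trans mult_1)
  qed
  also have "\<dots> = (real n + 1) ^ Suc m" by simp
  finally show ?thesis .
qed

lemma inv_power_bound:
  assumes M: "M \<ge> 1" and s: "s \<ge> 1"
  shows "\<bar>inverse ((1 - fps_X ^ M :: real fps) ^ s) $ n\<bar> \<le> (real n + 1) ^ (s - 1)"
  using s
proof (induction s arbitrary: n rule: dec_induct)
  case base
  then show ?case using inv_one_minus_XM[OF M] by simp
next
  case (step s)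
  have "inverse ((1 - fps_X ^ M :: real fps) ^ Suc s) = inverse (1 - fps_X ^ M) * inverse ((1 - fps_X ^ M) ^ s)"
    by (simp add: fps_inverse_mult)
  moreover have "\<bar>inverse (1 - fps_X ^ M :: real fps) $ n\<bar> \<le> 1" for n
    using inv_one_minus_XM[OF M] by simp
  ultimately show ?case using conv_bound[of "inverse (1 - fps_X ^ M)" "inverse ((1 - fps_X ^ M) ^ s)" "s - 1" n] step
    by (simp add: Suc_diff_le)
qed

lemma poly_conv_bound:
  fixes g :: "real fps"
  assumes g: "\<And>n. \<bar>g $ n\<bar> \<le> (real n + 1) ^ m"
  shows "\<bar>(fps_of_poly P * g) $ n\<bar> \<le> (\<Sum>i\<le>degree P. \<bar>coeff P i\<bar>) * (real n + 1) ^ m"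
proof -
  have "\<bar>(fps_of_poly P * g) $ n\<bar> \<le> (\<Sum>i=0..n. \<bar>coeff P i * g $ (n - i)\<bar>)"
    unfolding fps_mult_nth by (simp add: sum_abs)
  also have "\<dots> \<le> (\<Sum>i=0..n. \<bar>coeff P i\<bar> * (real n + 1) ^ m)"
  proof (rule sum_mono)
    fix i assume "i \<in> {0..n}"
    have "\<bar>g $ (n - i)\<bar> \<le> (real (n - i) + 1) ^ m" by (rule g)
    also have "\<dots> \<le> (real n + 1) ^ m" by (rule power_mono) auto
    finally show "\<bar>coeff P i * g $ (n - i)\<bar> \<le> \<bar>coeff P i\<bar> * (real n + 1) ^ m"
      by (simp add: abs_mult mult_left_mono)
  qed
  also have "\<dots> = (\<Sum>i=0..n. \<bar>coeff P i\<bar>) * (real n + 1) ^ m" by (simp add: sum_distrib_right)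
  also have "(\<Sum>i=0..n. \<bar>coeff P i\<bar>) \<le> (\<Sum>i\<le>degree P. \<bar>coeff P i\<bar>)"
  proof -
    have "(\<Sum>i=0..n. \<bar>coeff P i\<bar>) = (\<Sum>i\<in>{0..n} \<inter> {..degree P}. \<bar>coeff P i\<bar>)"
      by (rule sum.mono_neutral_right) (auto simp: coeff_eq_0)
    also have "\<dots> \<le> (\<Sum>i\<le>degree P. \<bar>coeff P i\<bar>)"
      by (rule sum_mono2) auto
    finally show ?thesis .
  qed
  then have "(\<Sum>i=0..n. \<bar>coeff P i\<bar>) * (real n + 1) ^ m \<le> (\<Sum>i\<le>degree P. \<bar>coeff P i\<bar>) * (real n + 1) ^ m"
    by (rule mult_right_mono) simp
  finally show ?thesis .
qed

lemma bound_to_bigo: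
  assumes "\<And>n. \<bar>f n\<bar> \<le> C * (real n + 1) ^ m"
  shows "f \<in> O(\<lambda>n. real n powr real m)"
proof (rule bigoI[where c = "\<bar>C\<bar> * 2 ^ m"])
  show "\<forall>\<^sub>F n in sequentially. norm (f n) \<le> \<bar>C\<bar> * 2 ^ m * norm (real n powr real m)"
    using eventually_ge_at_top[of "1::nat"]
  proof eventually_elim
    case (elim n)
    then have n1: "real n \<ge> 1" by simp
    have "norm (f n) \<le> C * (real n + 1) ^ m" using assms[of n] by simp
    also have "\<dots> \<le> \<bar>C\<bar> * (real n + 1) ^ m" by (intro mult_right_mono) auto
    also have "(real n + 1) ^ m \<le> (2 * real n) ^ m" using n1 by (intro power_mono) auto
    then have "\<bar>C\<bar> * (real n + 1) ^ m \<le> \<bar>C\<bar> * (2 * real n) ^ m" by (intro mult_left_mono) auto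
    also have "\<dots> = \<bar>C\<bar> * 2 ^ m * norm (real n powr real m)"
      using n1 by (simp add: powr_realpow power_mult_distrib)
    finally show ?case .
  qed
qed

lemma error_bound:
  assumes pos: "\<forall>i\<ge>1. 0 < a i"
    and gc: "\<forall>S. S \<subseteq> {1..k} \<and> card S = t \<longrightarrow> Gcd (a ` S) = 1"
    and t: "t \<ge> 1"
  shows "(\<lambda>n. (fps_of_poly B * inverse (fps_of_poly (UU a k))) $ n) \<in> O(\<lambda>n. real n powr (real t - 2))"
proof -
  define M where "M = (\<Prod>i\<in>{1..k}. a i)"
  define s where "s = t - 1"
  have M1: "M \<ge> 1" using pos by (simp add: M_def Suc_le_eq prod_pos)
  have d1: "UU a k dvd geo M ^ s" using UU_dvd[OF pos gc] by (simp add: M_def s_def)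
  have d2: "geo M ^ s dvd (1 - monom 1 M :: real poly) ^ s"
    unfolding geo_mult[symmetric] power_mult_distrib by (rule dvd_triv_right)
  obtain W where W: "(1 - monom 1 M :: real poly) ^ s = UU a k * W"
    using dvd_trans[OF d1 d2] by (auto elim: dvdE)
  define Uf where "Uf = fps_of_poly (UU a k)"
  define Wf where "Wf = fps_of_poly W"
  have Vf: "(1 - fps_X ^ M :: real fps) ^ s = Uf * Wf"
    using arg_cong[OF W, of fps_of_poly]
    by (simp add: Uf_def Wf_def fps_of_poly_power fps_of_poly_diff fps_of_poly_monom' fps_of_poly_mult)
  have "(Uf * Wf) $ 0 = 1" unfolding Vf[symmetric] using M1 by (simp add: fps_nth_power_0 power_0_left)
  then have W0: "Wf $ 0 \<noteq> 0" by (cases "Wf $ 0 = 0") auto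
  have "Wf * inverse (Uf * Wf) = inverse Uf * (Wf * inverse Wf)"
    by (simp only: fps_inverse_mult mult.commute mult.left_commute)
  also have "\<dots> = inverse Uf" using inverse_mult_eq_1'[OF W0] by simp
  finally have invU: "inverse Uf = Wf * inverse ((1 - fps_X ^ M) ^ s)"
    unfolding Vf by simp
  have E: "fps_of_poly B * inverse Uf = fps_of_poly (B * W) * inverse ((1 - fps_X ^ M) ^ s)"
    unfolding invU fps_of_poly_mult Wf_def by (simp only: mult.assoc)
  show ?thesis
  proof (cases "s = 0")
    case True
    then have "fps_of_poly B * inverse Uf = fps_of_poly (B * W)" using E by simp
    have "eventually (\<lambda>n. coeff (B * W) n = 0) sequentially"
      using eventually_gt_at_top[of "degree (B * W)"] by (rule eventually_mono) (simp add: coeff_eq_0)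
    then have ev: "eventually (\<lambda>n. (fps_of_poly B * inverse Uf) $ n = 0) sequentially"
      unfolding \<open>fps_of_poly B * inverse Uf = fps_of_poly (B * W)\<close> by simp
    show ?thesis unfolding Uf_def[symmetric]
      by (rule bigoI[where c = 0]) (use ev in \<open>auto elim!: eventually_mono\<close>)
  next
    case False
    have bnd: "\<bar>inverse ((1 - fps_X ^ M :: real fps) ^ s) $ n\<bar> \<le> (real n + 1) ^ (s - 1)" for n
      using inv_power_bound[OF M1, of s n] False by simp
    have "\<bar>(fps_of_poly B * inverse Uf) $ n\<bar> \<le> (\<Sum>i\<le>degree (B * W). \<bar>coeff (B * W) i\<bar>) * (real n + 1) ^ (s - 1)" for n
      unfolding E by (rule poly_conv_bound[OF bnd])
    then have "(\<lambda>n. (fps_of_poly B * inverse Uf) $ n) \<in> O(\<lambda>n. real n powr real (s - 1))"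
      by (rule bound_to_bigo)
    moreover have "real (s - 1) = real t - 2" using False t by (simp add: s_def of_nat_diff)
    ultimately show ?thesis by (simp add: Uf_def)
  qed
qed

lemma poly_UU_1: "poly (UU a k) 1 = (\<Prod>i\<in>{1..k}. real (a i))"
  by (simp add: UU_def poly_prod poly_geo_1)

lemma poly_UU_0: "\<forall>i\<ge>1. 0 < a i \<Longrightarrow> poly (UU a k) 0 = 1"
  by (simp add: UU_def poly_prod poly_geo_0)

lemma main_decomp:
  fixes a :: "nat \<Rightarrow> nat" and r k :: nat
  assumes pos: "\<forall>i\<ge>1. 0 < a i"
    and r_pos: "0 < r"
    and k_gt: "k > 2 * r"
    and gcd_cond: "\<forall>S. S \<subseteq> {1..k} \<and> card S = k - 2 * r \<longrightarrow> Gcd (a ` S) = 1"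
  shows "\<exists>q. approx (p_A a k) q (real (degree q) - real (2*r+1)) \<and> degree q \<ge> 2 \<and> lead_coeff q > 0"
proof -
  define U where "U = UU a k"
  have U1: "poly U 1 > 0" unfolding U_def poly_UU_1 using pos by (intro prod_pos) auto
  have U0: "poly U 0 \<noteq> 0" using pos by (simp add: U_def poly_UU_0)
  have pr: "prime_elem ([:1,-1:] :: real poly)"
    by (rule prime_elem_linear_field_poly) simp
  have ndvd: "\<not> [:1,-1:] dvd U"
  proof
    assume "[:1,-1:] dvd U"
    then obtain c where "U = [:1,-1:] * c" by (auto elim: dvdE)
    then have "poly U 1 = 0" by simp
    then show False using U1 by simp
  qed
  have cop: "coprime U ([:1,-1:]^k)" using pr ndvd by (rule prime_elem_imp_power_coprime)
  define A where "A = fst (bezout_coefficients U ([:1,-1:]^k))"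
  define B where "B = snd (bezout_coefficients U ([:1,-1:]^k))"
  have bez: "A * U + B * [:1,-1:]^k = 1"
    using bezout_coefficients_fst_snd[of U "[:1,-1:]^k"] cop
    by (simp add: A_def B_def coprime_iff_gcd_eq_1)
  have k1: "k \<ge> 1" using k_gt by simp
  have A1: "poly A 1 * poly U 1 = 1"
    using arg_cong[OF bez, of "\<lambda>p. poly p 1"] k1 by (simp add: zero_power)
  then have A1pos: "poly A 1 > 0" using U1 by (metis mult_pos_pos zero_less_mult_pos2 zero_less_one)
  define q where "q = PP A k"
  have cq: "coeff q (k - 1) = poly A 1 / fact (k - 1)" using PP_deg(2) by (simp add: q_def)
  then have cq0: "coeff q (k - 1) > 0" using A1pos by simp
  have dq: "degree q = k - 1"
    using PP_deg(1)[of A k] le_degree[of q "k - 1"] cq0 by (simp add: q_def)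
  have lq: "lead_coeff q > 0" using dq cq0 by simp
  have pA: "p_A a k n = (fps_of_poly A * inverse ((1 - fps_X)^k)) $ n + (fps_of_poly B * inverse (fps_of_poly U)) $ n" for n
    unfolding p_A_def fps_pA U_def[symmetric] fps_decomp[OF bez U0] by simp
  have ev: "eventually (\<lambda>n. p_A a k n - poly q (real n) = (fps_of_poly B * inverse (fps_of_poly U)) $ n) sequentially"
    using eventually_ge_at_top[of "degree A"]
    by (rule eventually_mono) (simp add: pA coeff_PP[OF k1] q_def)
  have t1: "k - 2 * r \<ge> 1" using k_gt by simp
  have err: "(\<lambda>n. (fps_of_poly B * inverse (fps_of_poly U)) $ n) \<in> O(\<lambda>n. real n powr (real (k - 2 * r) - 2))"
    unfolding U_def by (rule error_bound[OF pos gcd_cond t1])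
  have "(\<lambda>n. p_A a k n - poly q (real n)) \<in> O(\<lambda>n. real n powr (real (k - 2 * r) - 2))"
    using landau_o.big.in_cong[OF ev] err by simp
  moreover have "real (k - 2 * r) - 2 = real (degree q) - real (2*r+1)"
    using k_gt dq by (simp add: of_nat_diff)
  ultimately have "approx (p_A a k) q (real (degree q) - real (2*r+1))"
    unfolding approx_def by simp
  moreover have "degree q \<ge> 2" using dq k_gt r_pos by simp
  ultimately show ?thesis using lq by blast
qed

theorem theorem4p7:
  fixes a :: "nat \<Rightarrow> nat" and r k :: nat
  assumes pos: "\<forall>i\<ge>1. 0 < a i"
    and incr: "\<forall>i\<ge>1. a i \<le> a (Suc i)"
    and r_pos: "0 < r"
    and k_gt: "k > 2 * r"
    and gcd_cond: "\<forall>S. S \<subseteq> {1..k} \<and> card S = k - 2 * r \<longrightarrow> Gcd (a ` S) = 1"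
  shows "asymp_r_log_concave r (p_A a k)"
proof -
  obtain q where "approx (p_A a k) q (real (degree q) - real (2*r+1))" "degree q \<ge> 2" "lead_coeff q > 0"
    using main_decomp[OF pos r_pos k_gt gcd_cond] by blast
  then show ?thesis by (rule approx_final)
qed

end
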